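(* For the Hydra game played on any finite rooted unweighted tree $T$ of height $h_T$ with $L_T$ leaves, the total (expected) cost of the algorithm $\mathrm{HERC}$ is at most $O(h_T\cdot(1+\log L_T))$, i.e., there is an absolute constant $C$ such that for every such tree and every (oblivious) adversary, the total cost of $\mathrm{HERC}$ is at most $C\,h_T(1+\log L_T)$.
   Context: Hydra game: played between an online algorithm and an oblivious adversary on a fixed finite rooted unweighted tree $T$ known in advance. Each node is asleep, alive, or dead. Initially the root $r_T$ is alive and all other nodes are asleep. In each step the adversary picks an alive node $w$, makes it dead, and makes all its children alive (so all ancestors of alive nodes are dead and all their descendants asleep). The algorithm must always remain at an alive node (initially the root); if its node is killed it must move to an alive node $w'$, paying $\mathrm{dist}(w,w')$, the shortest-path distance in $T$. The game ends when all nodes except one are dead; the goal is to minimize total movement cost. $\mathrm{rank}(u)$ is the number of non-dead leaves in the subtree of $u$. The randomized algorithm $\mathrm{HERC}$ keeps its position distributed according to $\eta$, where $\eta(u)=\mathrm{rank}(u)/\mathrm{rank}(r_T)$ for alive $u$ and $\eta(u)=0$ otherwise; when an alive node $u$ is killed, if $u$ is not a leaf its probability is distributed to its children proportionally to their ranks, and if $u$ is a leaf all other probabilities are scaled by $1/(1-\eta(u))$. Its cost is the transport cost: moving probability mass $p$ from $u$ to $w$ costs $p\cdot \mathrm{dist}(u,w)$ (which equals the expected movement cost of a corresponding randomized strategy). *)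

theory Defs
  imports Complex_Main
begin

text \<open>A finite rooted tree is represented by a finite, prefix-closed set of
  nat lists: the root is the empty list, and the children of a node u are the
  nodes u @ [i] in the set.  Every finite rooted tree is isomorphic to one of these.\<close>

definition is_tree :: "nat list set \<Rightarrow> bool" where
  "is_tree T \<longleftrightarrow> finite T \<and> [] \<in> T \<and> (\<forall>u i. u @ [i] \<in> T \<longrightarrow> u \<in> T)"

definition children :: "nat list set \<Rightarrow> nat list \<Rightarrow> nat list set" where
  "children T u = {v \<in> T. \<exists>i. v = u @ [i]}"

definition is_leaf :: "nat list set \<Rightarrow> nat list \<Rightarrow> bool" where
  "is_leaf T u \<longleftrightarrow> u \<in> T \<and> children T u = {}"

definition leaves :: "nat list set \<Rightarrow> nat list set" where
  "leaves T = {u. is_leaf T u}"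

definition height :: "nat list set \<Rightarrow> nat" where
  "height T = Max (length ` T)"

definition adjacent :: "nat list \<Rightarrow> nat list \<Rightarrow> bool" where
  "adjacent u v \<longleftrightarrow> (\<exists>i. v = u @ [i]) \<or> (\<exists>i. u = v @ [i])"

definition tdist :: "nat list set \<Rightarrow> nat list \<Rightarrow> nat list \<Rightarrow> nat" where
  "tdist T u v = (LEAST n. \<exists>p. length p = Suc n \<and> p ! 0 = u \<and> p ! n = v \<and>
       set p \<subseteq> T \<and> (\<forall>i<n. adjacent (p ! i) (p ! Suc i)))"

text \<open>Game state: the set D of dead nodes.  A node is alive if it is not dead
  and it is the root or its parent is dead; otherwise (not dead) it is asleep.\<close>

definition alive :: "nat list set \<Rightarrow> nat list set \<Rightarrow> nat list \<Rightarrow> bool" where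
  "alive T D u \<longleftrightarrow> u \<in> T \<and> u \<notin> D \<and> (u = [] \<or> butlast u \<in> D)"

definition game_over :: "nat list set \<Rightarrow> nat list set \<Rightarrow> bool" where
  "game_over T D \<longleftrightarrow> card (T - D) \<le> 1"

definition rank :: "nat list set \<Rightarrow> nat list set \<Rightarrow> nat list \<Rightarrow> nat" where
  "rank T D u = card {l \<in> leaves T. l \<notin> D \<and> (\<exists>s. l = u @ s)}"

definition eta :: "nat list set \<Rightarrow> nat list set \<Rightarrow> nat list \<Rightarrow> real" where
  "eta T D u = (if alive T D u then real (rank T D u) / real (rank T D []) else 0)"

text \<open>Transport cost of HERC when the adversary kills the alive node w in state D:
  a non-leaf w sends its mass to its children (each child c receives its new mass
  eta c, over distance tdist w c); a leaf w sends its mass eta w to every other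
  node v in proportion to v's new (rescaled) mass.\<close>

definition herc_step_cost :: "nat list set \<Rightarrow> nat list set \<Rightarrow> nat list \<Rightarrow> real" where
  "herc_step_cost T D w =
     (if is_leaf T w
      then eta T D w * (\<Sum>v\<in>T - {w}. eta T (insert w D) v * real (tdist T w v))
      else (\<Sum>c\<in>children T w. eta T (insert w D) c * real (tdist T w c)))"

text \<open>An oblivious adversary is a fixed sequence of nodes to kill; it is valid if
  each killed node is alive at its time and the game has not ended yet.\<close>

fun valid_seq :: "nat list set \<Rightarrow> nat list set \<Rightarrow> nat list list \<Rightarrow> bool" where
  "valid_seq T D [] = True"
| "valid_seq T D (w # ws) =
     (\<not> game_over T D \<and> alive T D w \<and> valid_seq T (insert w D) ws)"

fun herc_cost :: "nat list set \<Rightarrow> nat list set \<Rightarrow> nat list list \<Rightarrow> real" where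
  "herc_cost T D [] = 0"
| "herc_cost T D (w # ws) = herc_step_cost T D w + herc_cost T (insert w D) ws"

end

theory Submission imports Defs begin

definition harm :: "nat \<Rightarrow> real" where
  "harm n = (\<Sum>k=1..n. 1 / real k)"

lemma harm_0: "harm 0 = 0" unfolding harm_def by simp

lemma harm_Suc: "harm (Suc n) = harm n + 1 / real (Suc n)"
  unfolding harm_def by simp

lemma harm_nonneg: "0 \<le> harm n"
  unfolding harm_def by (intro sum_nonneg) auto

lemma harm_le_ln: "n > 0 \<Longrightarrow> harm n \<le> 1 + ln (real n)"
proof (induction n)
  case 0 then show ?case by simp
next
  case (Suc n)
  show ?case
  proof (cases "n = 0")
    case True then show ?thesis by (simp add: harm_Suc harm_0)
  next
    case False
    then have n: "real n > 0" by simp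
    have "ln (real n / real (Suc n)) \<le> real n / real (Suc n) - 1"
      using n by (intro ln_le_minus_one) auto
    also have "\<dots> = - 1 / real (Suc n)" by (simp add: field_simps)
    finally have "ln (real n) - ln (real (Suc n)) \<le> - 1 / real (Suc n)"
      using n by (simp add: ln_div)
    then show ?thesis using Suc False by (simp add: harm_Suc)
  qed
qed

inductive reach :: "nat list set \<Rightarrow> nat list \<Rightarrow> nat list \<Rightarrow> nat \<Rightarrow> bool" for T where
  r0: "reach T u u 0"
| rS: "reach T u v n \<Longrightarrow> adjacent v x \<Longrightarrow> x \<in> T \<Longrightarrow> reach T u x (Suc n)"

lemma reach_path: "reach T u v n \<Longrightarrow> u \<in> T \<Longrightarrow> \<exists>p. length p = Suc n \<and> p ! 0 = u \<and> p ! n = v \<and>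
       set p \<subseteq> T \<and> (\<forall>i<n. adjacent (p ! i) (p ! Suc i))"
proof (induction rule: reach.induct)
  case (r0 u)
  then show ?case by (intro exI[of _ "[u]"]) auto
next
  case (rS u v n x)
  then obtain p where p: "length p = Suc n" "p ! 0 = u" "p ! n = v" "set p \<subseteq> T"
     "\<forall>i<n. adjacent (p ! i) (p ! Suc i)" by blast
  show ?case
  proof (intro exI[of _ "p @ [x]"] conjI allI impI)
    fix i assume "i < Suc n"
    then show "adjacent ((p @ [x]) ! i) ((p @ [x]) ! Suc i)"
      using p rS by (cases "i < n") (auto simp: nth_append less_Suc_eq)
  qed (use p rS in \<open>auto simp: nth_append\<close>)
qed

lemma reach_tdist: "reach T u v n \<Longrightarrow> u \<in> T \<Longrightarrow> tdist T u v \<le> n"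
  unfolding tdist_def by (rule Least_le) (rule reach_path)

lemma reach_in: "reach T u v n \<Longrightarrow> u \<in> T \<Longrightarrow> v \<in> T"
  by (induction rule: reach.induct) auto

lemma reach_pre: "reach T u v n \<Longrightarrow> adjacent x u \<Longrightarrow> x \<in> T \<Longrightarrow> u \<in> T \<Longrightarrow> reach T x v (Suc n)"
proof (induction rule: reach.induct)
  case (r0 u)
  then show ?case using reach.r0[of T x] reach.rS[of T x x 0 u] by simp
next
  case (rS u v n y)
  then have "reach T x v (Suc n)" by simp
  then show ?case using rS reach.rS by blast
qed

lemma adjacent_sym: "adjacent u v \<Longrightarrow> adjacent v u"
  unfolding adjacent_def by auto

lemma reach_sym: "reach T u v n \<Longrightarrow> u \<in> T \<Longrightarrow> reach T v u n"
proof (induction rule: reach.induct)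
  case (r0 u)
  show ?case by (rule reach.r0)
next
  case (rS u v n x)
  have "v \<in> T" using rS reach_in by blast
  moreover have "reach T v u n" using rS by simp
  ultimately show ?case using reach_pre[of T v u n x] adjacent_sym rS by blast
qed

lemma reach_trans: "reach T v x n \<Longrightarrow> reach T u v m \<Longrightarrow> reach T u x (m + n)"
  by (induction rule: reach.induct) (auto intro: reach.rS)

lemma tree_prefix: "is_tree T \<Longrightarrow> u @ s \<in> T \<Longrightarrow> u \<in> T"
proof (induction s rule: rev_induct)
  case Nil then show ?case by simp
next
  case (snoc x xs)
  then show ?case unfolding is_tree_def by (metis append_assoc)
qed

lemma reach_root: "is_tree T \<Longrightarrow> v \<in> T \<Longrightarrow> reach T [] v (length v)"
proof (induction v rule: rev_induct)
  case Nil then show ?case by (simp add: reach.r0)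
next
  case (snoc x xs)
  then have "xs \<in> T" unfolding is_tree_def by blast
  then show ?case using snoc by (auto intro!: reach.rS simp: adjacent_def)
qed

lemma height_ge: "is_tree T \<Longrightarrow> v \<in> T \<Longrightarrow> length v \<le> height T"
  unfolding height_def is_tree_def by auto

lemma tdist_le: "is_tree T \<Longrightarrow> w \<in> T \<Longrightarrow> v \<in> T \<Longrightarrow> tdist T w v \<le> 2 * height T"
proof -
  assume t: "is_tree T" and w: "w \<in> T" and v: "v \<in> T"
  have "reach T w [] (length w)" using reach_sym reach_root t w unfolding is_tree_def by blast
  then have "reach T w v (length w + length v)" using reach_trans reach_root t v by blast
  then have "tdist T w v \<le> length w + length v" using reach_tdist w by blast
  then show ?thesis using height_ge[OF t w] height_ge[OF t v] by linarith
qed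

lemma tdist_child: "w \<in> T \<Longrightarrow> c \<in> children T w \<Longrightarrow> tdist T w c \<le> 1"
proof -
  assume "w \<in> T" "c \<in> children T w"
  then have "reach T w c (Suc 0)" unfolding children_def
    by (auto intro!: reach.rS[OF reach.r0] simp: adjacent_def)
  then show ?thesis using reach_tdist \<open>w \<in> T\<close> by fastforce
qed


definition SL :: "nat list set \<Rightarrow> nat list set \<Rightarrow> nat list set" where
  "SL T D = {l \<in> leaves T. l \<notin> D}"

definition acnt :: "nat list set \<Rightarrow> nat list \<Rightarrow> nat" where
  "acnt D l = card {u \<in> D. \<exists>s. l = u @ s}"

definition Phi :: "nat list set \<Rightarrow> nat list set \<Rightarrow> real" where
  "Phi T D = (\<Sum>l\<in>SL T D. real (height T) - real (acnt D l)) / real (rank T D [])"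

definition pclosed :: "nat list set \<Rightarrow> bool" where
  "pclosed D \<longleftrightarrow> (\<forall>u s. u @ s \<in> D \<longrightarrow> u \<in> D)"

lemma finite_leaves: "is_tree T \<Longrightarrow> finite (leaves T)"
  unfolding leaves_def is_leaf_def is_tree_def by (auto intro: finite_subset)

lemma finite_SL: "is_tree T \<Longrightarrow> finite (SL T D)"
  unfolding SL_def using finite_leaves by auto

lemma rank_root: "rank T D [] = card (SL T D)"
  unfolding rank_def SL_def by simp

lemma prefixes_sub: "{u. \<exists>s. l = u @ s} \<subseteq> (\<lambda>k. take k l) ` {0..length l}"
proof
  fix u assume "u \<in> {u. \<exists>s. l = u @ s}"
  then obtain s where "l = u @ s" by auto
  then show "u \<in> (\<lambda>k. take k l) ` {0..length l}" by (intro image_eqI[of _ _ "length u"]) auto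
qed

lemma finite_prefixes: "finite {u \<in> D. \<exists>s. l = u @ s}"
  by (rule finite_subset[OF _ finite_imageI[of "{0..length l}" "\<lambda>k. take k l"]])
     (use prefixes_sub in auto)

lemma acnt_le: "l \<notin> D \<Longrightarrow> acnt D l \<le> length l"
proof -
  assume l: "l \<notin> D"
  have "{u \<in> D. \<exists>s. l = u @ s} \<subseteq> (\<lambda>k. take k l) ` {0..<length l}"
  proof
    fix u assume "u \<in> {u \<in> D. \<exists>s. l = u @ s}"
    then obtain s where s: "l = u @ s" "u \<in> D" by auto
    then have "s \<noteq> []" using l by auto
    then show "u \<in> (\<lambda>k. take k l) ` {0..<length l}" using s by (intro image_eqI[of _ _ "length u"]) auto
  qed
  then have "acnt D l \<le> card ((\<lambda>k. take k l) ` {0..<length l})"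
    unfolding acnt_def by (intro card_mono) auto
  also have "\<dots> \<le> length l" using card_image_le[of "{0..<length l}" "\<lambda>k. take k l"] by simp
  finally show ?thesis .
qed

lemma acnt_le_h: "is_tree T \<Longrightarrow> l \<in> SL T D \<Longrightarrow> acnt D l \<le> height T"
  using acnt_le[of l D] height_ge[of T l] unfolding SL_def leaves_def is_leaf_def by force

lemma sumX_bounds: "is_tree T \<Longrightarrow> A \<subseteq> SL T D \<Longrightarrow>
   0 \<le> (\<Sum>l\<in>A. real (height T) - real (acnt D l)) \<and>
   (\<Sum>l\<in>A. real (height T) - real (acnt D l)) \<le> real (card A) * real (height T)"
proof -
  assume t: "is_tree T" and A: "A \<subseteq> SL T D"
  have "\<forall>l\<in>A. 0 \<le> real (height T) - real (acnt D l) \<and> real (height T) - real (acnt D l) \<le> real (height T)"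
    using acnt_le_h[OF t] A by force
  then show ?thesis
    using sum_nonneg[of A "\<lambda>l. real (height T) - real (acnt D l)"]
       sum_bounded_above[of A "\<lambda>l. real (height T) - real (acnt D l)" "real (height T)"]
    by auto
qed

lemma Phi_bounds: "is_tree T \<Longrightarrow> 0 \<le> Phi T D \<and> Phi T D \<le> real (height T)"
proof -
  assume t: "is_tree T"
  define X where "X = (\<Sum>l\<in>SL T D. real (height T) - real (acnt D l))"
  have X: "0 \<le> X" "X \<le> real (rank T D []) * real (height T)"
    using sumX_bounds[OF t order_refl] unfolding X_def rank_root by auto
  have "Phi T D = X / real (rank T D [])" unfolding Phi_def X_def ..
  show ?thesis
  proof (cases "rank T D [] = 0")
    case True then show ?thesis using \<open>Phi T D = _\<close> t by simp
  next
    case False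
    then have r: "real (rank T D []) > 0" by simp
    have "X / real (rank T D []) \<le> real (height T)"
      using X r by (simp add: pos_divide_le_eq mult.commute)
    then show ?thesis using X r \<open>Phi T D = _\<close> by simp
  qed
qed

lemma disj_sum_card:
  assumes "finite I" "finite B" "\<And>i. i \<in> I \<Longrightarrow> A i \<subseteq> B"
    "\<And>i j. i \<in> I \<Longrightarrow> j \<in> I \<Longrightarrow> i \<noteq> j \<Longrightarrow> A i \<inter> A j = {}"
  shows "(\<Sum>i\<in>I. card (A i)) \<le> card B"
proof -
  have fin: "\<forall>i\<in>I. finite (A i)" using assms(2,3) finite_subset by blast
  have "(\<Sum>i\<in>I. card (A i)) = card (\<Union>i\<in>I. A i)"
    using card_UN_disjoint[OF assms(1) fin] assms(4) by simp
  also have "\<dots> \<le> card B" using assms(2,3) by (intro card_mono) auto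
  finally show ?thesis .
qed

lemma alive_ext: "pclosed D \<Longrightarrow> alive T D u \<Longrightarrow> alive T D (u @ t) \<Longrightarrow> t = []"
proof (rule ccontr)
  assume p: "pclosed D" and a: "alive T D u" "alive T D (u @ t)" and t: "t \<noteq> []"
  then have "butlast (u @ t) \<in> D" unfolding alive_def by auto
  then have "u @ butlast t \<in> D" using t by (simp add: butlast_append)
  then have "u \<in> D" using p unfolding pclosed_def by blast
  then show False using a unfolding alive_def by auto
qed

lemma sum_eta_le1: "is_tree T \<Longrightarrow> pclosed D \<Longrightarrow> (\<Sum>v\<in>T. eta T D v) \<le> 1"
proof -
  assume t: "is_tree T" and p: "pclosed D"
  define R where "R = rank T D []"
  define A where "A v = {l \<in> leaves T. l \<notin> D \<and> (\<exists>s. l = v @ s)}" for v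
  have ft: "finite T" using t unfolding is_tree_def by auto
  have "(\<Sum>v\<in>T. eta T D v) = (\<Sum>v\<in>{v\<in>T. alive T D v}. real (rank T D v) / real R)"
    unfolding eta_def R_def using ft by (simp add: sum.inter_filter)
  also have "\<dots> = real (\<Sum>v\<in>{v\<in>T. alive T D v}. card (A v)) / real R"
    by (simp add: sum_divide_distrib rank_def A_def)
  also have "\<dots> \<le> 1"
  proof -
    have "(\<Sum>v\<in>{v\<in>T. alive T D v}. card (A v)) \<le> card (SL T D)"
    proof (rule disj_sum_card)
      show "finite {v\<in>T. alive T D v}" using ft by auto
      show "finite (SL T D)" using finite_SL[OF t] .
      show "A i \<subseteq> SL T D" for i unfolding A_def SL_def by auto
      show "A i \<inter> A j = {}" if "i \<in> {v\<in>T. alive T D v}" "j \<in> {v\<in>T. alive T D v}" "i \<noteq> j" for i j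
      proof (rule ccontr)
        assume "A i \<inter> A j \<noteq> {}"
        then obtain l where l: "l \<in> A i" "l \<in> A j" by blast
        obtain s where "l = i @ s" using l(1) unfolding A_def by blast
        moreover obtain s' where "l = j @ s'" using l(2) unfolding A_def by blast
        ultimately have "i @ s = j @ s'" by simp
        then obtain us where "(i = j @ us \<and> us @ s = s') \<or> (i @ us = j \<and> s = us @ s')"
          using append_eq_append_conv2[of i s j s'] by blast
        then show False using alive_ext[OF p] that by auto
      qed
    qed
    then have "real (\<Sum>v\<in>{v\<in>T. alive T D v}. card (A v)) \<le> real R"
      unfolding R_def rank_root by linarith
    then show ?thesis by (cases "R = 0") (auto simp: field_simps)
  qed
  finally show ?thesis .
qed

lemma eta_nonneg: "0 \<le> eta T D v"
  unfolding eta_def by auto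

lemma pclosed_insert: "pclosed D \<Longrightarrow> alive T D w \<Longrightarrow> pclosed (insert w D)"
  unfolding pclosed_def
proof (intro allI impI)
  fix u s assume p: "\<forall>u s. u @ s \<in> D \<longrightarrow> u \<in> D" and a: "alive T D w" and us: "u @ s \<in> insert w D"
  show "u \<in> insert w D"
  proof (cases "u @ s \<in> D")
    case True then show ?thesis using p by blast
  next
    case False
    then have w: "w = u @ s" using us by blast
    show ?thesis
    proof (cases "s = []")
      case True then show ?thesis using w by simp
    next
      case False
      then have "w \<noteq> []" using w by simp
      then have "butlast w \<in> D" using a unfolding alive_def by blast
      then have "u @ butlast s \<in> D" using w False by (simp add: butlast_append)
      then show ?thesis using p by blast
    qed
  qed
qed

lemma leaf_no_ext: "is_tree T \<Longrightarrow> is_leaf T w \<Longrightarrow> w @ s \<in> T \<Longrightarrow> s = []"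
proof (rule ccontr)
  assume t: "is_tree T" and lw: "is_leaf T w" and ws: "w @ s \<in> T" and s: "s \<noteq> []"
  have "w @ s = (w @ [hd s]) @ tl s" using s by simp
  then have "w @ [hd s] \<in> T" using tree_prefix[OF t] ws by metis
  then have "w @ [hd s] \<in> children T w" unfolding children_def by auto
  then show False using lw unfolding is_leaf_def by auto
qed

lemma real_ineq: "0 \<le> X' \<Longrightarrow> X' \<le> X \<Longrightarrow> X \<le> real r * h \<Longrightarrow> 0 \<le> h \<Longrightarrow> r \<ge> 2 \<Longrightarrow>
   X' / real (r - 1) \<le> X / real r + 2 * h / real r"
proof -
  assume a: "0 \<le> X'" "X' \<le> X" "X \<le> real r * h" "0 \<le> h" "r \<ge> 2"
  have r1: "real (r - 1) = real r - 1" using a by auto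
  have "X' * real r \<le> X * real r" using a by (intro mult_right_mono) auto
  also have "\<dots> \<le> X * (real r - 1) + 2 * h * (real r - 1)"
  proof -
    have "0 \<le> h * (real r - 2)" using a by (intro mult_nonneg_nonneg) auto
    then have "real r * h \<le> 2 * h * (real r - 1)" by (simp add: algebra_simps)
    then show ?thesis using a by (simp add: algebra_simps)
  qed
  finally have "X' * real r \<le> X * (real r - 1) + 2 * h * (real r - 1)" .
  then show ?thesis unfolding r1 using a by (simp add: field_simps)
qed

lemma nonleaf_step:
  assumes t: "is_tree T" and p: "pclosed D" and a: "alive T D w" and nl: "\<not> is_leaf T w"
  shows "herc_step_cost T D w + Phi T (insert w D) \<le> Phi T D"
    "rank T (insert w D) [] = rank T D []"
proof -
  define D' where "D' = insert w D"
  define R where "R = rank T D []"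
  have wT: "w \<in> T" "w \<notin> D" using a unfolding alive_def by auto
  have SL': "SL T D' = SL T D" using nl unfolding SL_def D'_def leaves_def by auto
  show R': "rank T (insert w D) [] = rank T D []"
    using SL' unfolding rank_root D'_def by simp
  define P where "P l = (\<exists>s. l = w @ s)" for l
  have ac: "real (acnt D' l) = real (acnt D l) + (if P l then 1 else 0)" for l
  proof -
    have "{u \<in> D'. \<exists>s. l = u @ s} = (if P l then insert w {u \<in> D. \<exists>s. l = u @ s} else {u \<in> D. \<exists>s. l = u @ s})"
      unfolding D'_def P_def by auto
    then show ?thesis unfolding acnt_def using finite_prefixes[of D l] wT by auto
  qed
  have rw: "rank T D w = card {l \<in> SL T D. P l}"
    unfolding rank_def SL_def P_def by (rule arg_cong[where f=card]) auto
  have "(\<Sum>l\<in>SL T D'. real (height T) - real (acnt D' l))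
      = (\<Sum>l\<in>SL T D. real (height T) - real (acnt D l)) - (\<Sum>l\<in>SL T D. (if P l then 1 else 0))"
  proof -
    have "real (height T) - (real (acnt D l) + (if P l then 1 else 0)) =
          (real (height T) - real (acnt D l)) - (if P l then 1 else 0)" for l by simp
    then show ?thesis unfolding SL' ac by (simp only: sum_subtractf)
  qed
  also have "(\<Sum>l\<in>SL T D. (if P l then 1 else 0)) = real (rank T D w)"
    unfolding rw using finite_SL[OF t] by (simp add: sum.If_cases Int_def)
  finally have phi: "Phi T D' = Phi T D - real (rank T D w) / real R"
    unfolding Phi_def R_def R'[folded D'_def] by (simp add: diff_divide_distrib)
  have ch: "children T w \<subseteq> T" unfolding children_def by auto
  have fch: "finite (children T w)" using ch t finite_subset unfolding is_tree_def by blast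
  have "herc_step_cost T D w = (\<Sum>c\<in>children T w. eta T D' c * real (tdist T w c))"
    unfolding herc_step_cost_def D'_def using nl by simp
  also have "\<dots> \<le> (\<Sum>c\<in>children T w. real (rank T D c) / real R)"
  proof (rule sum_mono)
    fix c assume c: "c \<in> children T w"
    have "eta T D' c \<le> real (rank T D' c) / real R"
      unfolding eta_def R_def R'[folded D'_def] by auto
    also have "\<dots> \<le> real (rank T D c) / real R"
    proof -
      have "{l \<in> leaves T. l \<notin> D' \<and> (\<exists>s. l = c @ s)} \<subseteq> {l \<in> leaves T. l \<notin> D \<and> (\<exists>s. l = c @ s)}"
        unfolding D'_def by blast
      moreover have "finite {l \<in> leaves T. l \<notin> D \<and> (\<exists>s. l = c @ s)}"
        using finite_leaves[OF t] by simp
      ultimately have "rank T D' c \<le> rank T D c" unfolding rank_def by (rule card_mono[rotated])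
      then show ?thesis by (intro divide_right_mono) simp_all
    qed
    finally have e: "eta T D' c \<le> real (rank T D c) / real R" .
    have "eta T D' c * real (tdist T w c) \<le> eta T D' c * 1"
      using tdist_child[OF wT(1) c] eta_nonneg by (intro mult_left_mono) auto
    then show "eta T D' c * real (tdist T w c) \<le> real (rank T D c) / real R" using e by simp
  qed
  also have "\<dots> = real (\<Sum>c\<in>children T w. rank T D c) / real R"
    by (simp add: sum_divide_distrib)
  also have "\<dots> \<le> real (rank T D w) / real R"
  proof -
    have "(\<Sum>c\<in>children T w. rank T D c) \<le> rank T D w"
      unfolding rank_def
    proof (rule disj_sum_card[OF fch])
      show "finite {l \<in> leaves T. l \<notin> D \<and> (\<exists>s. l = w @ s)}" using finite_leaves[OF t] by auto
      show "{l \<in> leaves T. l \<notin> D \<and> (\<exists>s. l = i @ s)} \<subseteq> {l \<in> leaves T. l \<notin> D \<and> (\<exists>s. l = w @ s)}"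
        if "i \<in> children T w" for i using that unfolding children_def by auto
      show "{l \<in> leaves T. l \<notin> D \<and> (\<exists>s. l = i @ s)} \<inter> {l \<in> leaves T. l \<notin> D \<and> (\<exists>s. l = j @ s)} = {}"
        if "i \<in> children T w" "j \<in> children T w" "i \<noteq> j" for i j
        using that unfolding children_def by auto
    qed
    then have "real (\<Sum>c\<in>children T w. rank T D c) \<le> real (rank T D w)" by (rule of_nat_mono)
    then show ?thesis by (rule divide_right_mono) simp
  qed
  finally show "herc_step_cost T D w + Phi T (insert w D) \<le> Phi T D"
    using phi unfolding D'_def by simp
qed


lemma leaf_step:
  assumes t: "is_tree T" and p: "pclosed D" and a: "alive T D w" and lf: "is_leaf T w"
  shows "herc_step_cost T D w \<le> 2 * real (height T) / real (rank T D [])"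
    "Phi T (insert w D) \<le> Phi T D + 2 * real (height T) / real (rank T D [])"
    "rank T (insert w D) [] = rank T D [] - 1"
    "rank T D [] \<ge> 1"
proof -
  define D' where "D' = insert w D"
  define R where "R = rank T D []"
  define h where "h = real (height T)"
  have wT: "w \<in> T" "w \<notin> D" using a unfolding alive_def by auto
  have wS: "w \<in> SL T D" using lf wT unfolding SL_def leaves_def by auto
  have fS: "finite (SL T D)" using finite_SL[OF t] .
  have SL': "SL T D' = SL T D - {w}" unfolding SL_def D'_def by auto
  have R': "rank T D' [] = R - 1" unfolding rank_root SL' R_def using wS fS by simp
  then show "rank T (insert w D) [] = rank T D [] - 1" unfolding D'_def R_def .
  have "card (SL T D) > 0" using wS fS card_gt_0_iff by blast
  then have R1: "R \<ge> 1" unfolding R_def rank_root by simp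
  then show "rank T D [] \<ge> 1" unfolding R_def .
  have ext: "l = w" if "l \<in> T" "l = w @ s" for l s
    using leaf_no_ext[OF t lf] that by auto
  have ac: "acnt D' l = acnt D l" if l: "l \<in> SL T D'" for l
  proof -
    have "{u \<in> D'. \<exists>s. l = u @ s} = {u \<in> D. \<exists>s. l = u @ s}"
    proof -
      have "l \<in> SL T D - {w}" using l SL' by simp
      then have "l \<in> T" "l \<noteq> w" unfolding SL_def leaves_def is_leaf_def by auto
      then have "\<not> (\<exists>s. l = w @ s)" using ext by blast
      then show ?thesis unfolding D'_def by auto
    qed
    then show ?thesis unfolding acnt_def by simp
  qed
  define X where "X = (\<Sum>l\<in>SL T D. h - real (acnt D l))"
  define X' where "X' = (\<Sum>l\<in>SL T D - {w}. h - real (acnt D l))"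
  have PhiD': "Phi T D' = X' / real (R - 1)"
    unfolding Phi_def R'[symmetric] X'_def h_def SL'[symmetric] using ac by simp
  have PhiD: "Phi T D = X / real R" unfolding Phi_def X_def R_def h_def ..
  have b1: "0 \<le> X'" using sumX_bounds[OF t, of "SL T D - {w}" D] unfolding X'_def h_def by auto
  have b2: "X \<le> real R * h" using sumX_bounds[OF t, of "SL T D" D] unfolding X_def h_def R_def rank_root by auto
  have b3: "X' \<le> X" unfolding X_def X'_def
    using acnt_le_h[OF t] fS by (intro sum_mono2) (auto simp: h_def)
  have h0: "0 \<le> h" unfolding h_def by simp
  show "Phi T (insert w D) \<le> Phi T D + 2 * real (height T) / real (rank T D [])"
  proof (cases "R = 1")
    case True
    then show ?thesis using Phi_bounds[OF t, of D] PhiD' h0 unfolding D'_def R_def h_def by simp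
  next
    case False
    then have "R \<ge> 2" using R1 by simp
    then have "X' / real (R - 1) \<le> X / real R + 2 * h / real R"
      using real_ineq b1 b2 b3 h0 by blast
    then show ?thesis using PhiD PhiD' unfolding D'_def R_def h_def by simp
  qed
  have rw: "rank T D w \<le> 1"
  proof -
    have "{l \<in> leaves T. l \<notin> D \<and> (\<exists>s. l = w @ s)} \<subseteq> {w}"
      using ext unfolding leaves_def is_leaf_def by blast
    then have "card {l \<in> leaves T. l \<notin> D \<and> (\<exists>s. l = w @ s)} \<le> card {w}"
      by (intro card_mono) simp_all
    then show ?thesis unfolding rank_def by simp
  qed
  have e1: "eta T D w \<le> 1 / real R"
    unfolding eta_def R_def using rw by (auto intro: divide_right_mono)
  have fT: "finite T" using t unfolding is_tree_def by simp
  have "(\<Sum>v\<in>T - {w}. eta T D' v * real (tdist T w v)) \<le> (\<Sum>v\<in>T - {w}. eta T D' v * (2 * h))"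
  proof (rule sum_mono)
    fix v assume v: "v \<in> T - {w}"
    have "tdist T w v \<le> 2 * height T" using tdist_le[OF t wT(1)] v by blast
    then have "real (tdist T w v) \<le> 2 * h" unfolding h_def
      by (metis of_nat_le_iff of_nat_mult of_nat_numeral)
    then show "eta T D' v * real (tdist T w v) \<le> eta T D' v * (2 * h)"
      using eta_nonneg by (rule mult_left_mono)
  qed
  also have "\<dots> \<le> (\<Sum>v\<in>T. eta T D' v * (2 * h))"
    using fT eta_nonneg h0 by (intro sum_mono2) auto
  also have "\<dots> = (\<Sum>v\<in>T. eta T D' v) * (2 * h)" by (simp add: sum_distrib_right)
  also have "\<dots> \<le> 1 * (2 * h)"
    using sum_eta_le1[OF t pclosed_insert[OF p a]] h0 unfolding D'_def by (intro mult_right_mono) auto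
  finally have s2: "(\<Sum>v\<in>T - {w}. eta T D' v * real (tdist T w v)) \<le> 2 * h" by simp
  have s0: "0 \<le> (\<Sum>v\<in>T - {w}. eta T D' v * real (tdist T w v))"
    using eta_nonneg by (intro sum_nonneg mult_nonneg_nonneg) auto
  have "herc_step_cost T D w = eta T D w * (\<Sum>v\<in>T - {w}. eta T D' v * real (tdist T w v))"
    unfolding herc_step_cost_def D'_def using lf by simp
  also have "\<dots> \<le> (1 / real R) * (2 * h)"
    using e1 s2 s0 eta_nonneg by (intro mult_mono) auto
  finally show "herc_step_cost T D w \<le> 2 * real (height T) / real (rank T D [])"
    unfolding R_def h_def by simp
qed


lemma main_bound:
  "is_tree T \<Longrightarrow> pclosed D \<Longrightarrow> valid_seq T D ws \<Longrightarrow>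
   herc_cost T D ws \<le> Phi T D + 6 * real (height T) * harm (rank T D [])"
proof (induction ws arbitrary: D)
  case Nil
  then show ?case using Phi_bounds[of T D] harm_nonneg[of "rank T D []"] by simp
next
  case (Cons w ws)
  define h where "h = real (height T)"
  have h0: "0 \<le> h" unfolding h_def by simp
  have a: "alive T D w" and v: "valid_seq T (insert w D) ws" using Cons.prems by auto
  have p': "pclosed (insert w D)" using pclosed_insert[OF Cons.prems(2) a] .
  have IH: "herc_cost T (insert w D) ws \<le> Phi T (insert w D) + 6 * h * harm (rank T (insert w D) [])"
    using Cons.IH[OF Cons.prems(1) p' v] unfolding h_def .
  have hc: "herc_cost T D (w # ws) = herc_step_cost T D w + herc_cost T (insert w D) ws" by simp
  show ?case
  proof (cases "is_leaf T w")
    case False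
    note nl = nonleaf_step[OF Cons.prems(1,2) a False]
    show ?thesis using hc IH nl unfolding h_def by simp
  next
    case True
    note ls = leaf_step[OF Cons.prems(1,2) a True]
    define R where "R = rank T D []"
    have R: "R = Suc (R - 1)" using ls(4) unfolding R_def by simp
    have hR: "harm R = harm (R - 1) + 1 / real R" using harm_Suc[of "R - 1"] R by simp
    have q: "0 \<le> h / real R" using h0 by simp
    have "herc_cost T D (w # ws) \<le> 2 * h / real R + (Phi T D + 2 * h / real R + 6 * h * harm (R - 1))"
      using hc IH ls unfolding R_def h_def by simp
    also have "\<dots> \<le> Phi T D + 6 * h * harm R"
    proof -
      have "6 * h * harm R = 6 * h * harm (R - 1) + 6 * (h / real R)" unfolding hR by (simp add: algebra_simps)
      moreover have "2 * h / real R = 2 * (h / real R)" by simp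
      ultimately show ?thesis using q by linarith
    qed
    finally show ?thesis unfolding R_def h_def .
  qed
qed

theorem theorem4:
  shows "\<exists>C::real. \<forall>T ws. is_tree T \<longrightarrow> valid_seq T {} ws \<longrightarrow>
           herc_cost T {} ws \<le> C * real (height T) * (1 + ln (real (card (leaves T))))"
proof (intro exI[of _ 7] allI impI)
  fix T ws assume t: "is_tree T" and v: "valid_seq T {} ws"
  define h where "h = real (height T)"
  define L where "L = card (leaves T)"
  have h0: "0 \<le> h" unfolding h_def by simp
  have p: "pclosed {}" unfolding pclosed_def by simp
  have RL: "rank T {} [] = L" unfolding rank_root L_def SL_def by simp
  have "herc_cost T {} ws \<le> Phi T {} + 6 * h * harm L"
    using main_bound[OF t p v] RL unfolding h_def by simp
  also have "\<dots> \<le> h + 6 * h * harm L" using Phi_bounds[OF t, of "{}"] unfolding h_def by simp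
  also have "\<dots> \<le> 7 * h * (1 + ln (real L))"
  proof (cases "L = 0")
    case True then show ?thesis using h0 by (simp add: harm_0)
  next
    case False
    then have l1: "harm L \<le> 1 + ln (real L)" and l0: "0 \<le> ln (real L)"
      using harm_le_ln by auto
    have "6 * h * harm L \<le> 6 * h * (1 + ln (real L))"
      using l1 h0 by (intro mult_left_mono) auto
    moreover have "h \<le> h * (1 + ln (real L))" using h0 l0 by (simp add: algebra_simps)
    ultimately show ?thesis by (simp add: algebra_simps)
  qed
  finally show "herc_cost T {} ws \<le> 7 * real (height T) * (1 + ln (real (card (leaves T))))"
    unfolding h_def L_def .
qed

end
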